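(* For every $w\in W^{\mathfrak p}$ the number of arcs of the matching $M(\alpha_w)$ that join a negative point to a positive point is even. Consequently the cup diagram $C(w)$ is defined, and the assignment $w\mapsto C(w)$ is a bijection from $W^{\mathfrak p}$ onto the set $C(W^{\mathfrak p})=\{C(w)\mid w\in W^{\mathfrak p}\}$ (i.e. it is injective).
   Context: Let $n\ge 4$ and let $W$ be the Weyl group of type $D_n$: the Coxeter group on generators $s_0,\dots,s_{n-1}$ with $(s_is_j)^{m_{ij}}=e$, where $m_{ii}=1$, $m_{02}=m_{12}=3$, $m_{i,i+1}=3$ for $2\le i\le n-2$, and $m_{ij}=2$ otherwise. Let $l$ be the length function, $W_{\mathfrak p}=\langle s_1,\dots,s_{n-1}\rangle$, and $W^{\mathfrak p}=\{w\in W\mid l(sw)>l(w)\text{ for all } s\in\{s_1,\dots,s_{n-1}\}\}$ the minimal length representatives of $W_{\mathfrak p}\backslash W$. $W$ acts on the right on $\{+,-\}^n$: $s_i$ ($1\le i\le n-1$) swaps entries $i$ and $i+1$; $s_0$ sends $(a_1,a_2,a_3,\dots,a_n)$ to $(-a_2,-a_1,a_3,\dots,a_n)$. For $w\in W^{\mathfrak p}$ put $(\alpha_1,\dots,\alpha_n)=(+,\dots,+)\cdot w$ and $\alpha_{-i}=-\alpha_i$; the sequence $\alpha_w=(\alpha_{-n},\dots,\alpha_{-1},\alpha_1,\dots,\alpha_n)$. Let $P=\{-2n,\dots,-1,1,\dots,2n\}\subset\mathbb R$. The extended labeling of $P$ attached to $w$ puts $+$ at every $j<-n$, $-$ at every $j>n$,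 and $\alpha_j$ at $j$ with $1\le |j|\le n$. The matching $M(\alpha_w)$ is the (unique) set of $2n$ pairwise non-intersecting arcs in the lower half plane, each point of $P$ an endpoint of exactly one arc, each arc joining a point labeled $+$ to a point labeled $-$ with the $+$ point to the left. The cup diagram $C(w)$: the arcs of $M(\alpha_w)$ joining a negative to a positive point are of the form $(-y,y)$; list them as $y_1<y_2<\dots<y_{2k}$. For each $j=1,\dots,k$ replace the arcs $(-y_{2j-1},y_{2j-1})$ and $(-y_{2j},y_{2j})$ by the two arcs joining $-y_{2j}$ to $y_{2j-1}$ and $-y_{2j-1}$ to $y_{2j}$ (these cross once on the line $x=0$ and are called a linked pair). All other arcs are kept. *)

theory Defs
  imports Main
begin

text \<open>Elements of W are represented by words in the generators s_0,...,s_{n-1}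
  (lists of indices < n), modulo the congruence generated by the Coxeter relations.\<close>

definition cox_m :: "nat \<Rightarrow> nat \<Rightarrow> nat \<Rightarrow> nat" where
  "cox_m n i j =
     (if i = j then 1
      else if {i, j} = {0, 2} \<or> {i, j} = {1, 2} then 3
      else if 2 \<le> min i j \<and> max i j = min i j + 1 \<and> max i j \<le> n - 1 then 3
      else 2)"

definition relator :: "nat \<Rightarrow> nat \<Rightarrow> nat \<Rightarrow> nat list" where
  "relator n i j = concat (replicate (cox_m n i j) [i, j])"

inductive cox_eq :: "nat \<Rightarrow> nat list \<Rightarrow> nat list \<Rightarrow> bool" for n where
  cox_refl: "cox_eq n u u"
| cox_sym: "cox_eq n u v \<Longrightarrow> cox_eq n v u"
| cox_trans: "cox_eq n u v \<Longrightarrow> cox_eq n v w \<Longrightarrow> cox_eq n u w"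
| cox_rel: "i < n \<Longrightarrow> j < n \<Longrightarrow> cox_eq n (u @ relator n i j @ v) (u @ v)"

definition is_word :: "nat \<Rightarrow> nat list \<Rightarrow> bool" where
  "is_word n u \<longleftrightarrow> set u \<subseteq> {..<n}"

definition cox_len :: "nat \<Rightarrow> nat list \<Rightarrow> nat" where
  "cox_len n u = (LEAST k. \<exists>v. cox_eq n u v \<and> length v = k)"

definition in_Wp :: "nat \<Rightarrow> nat list \<Rightarrow> bool" where
  "in_Wp n u \<longleftrightarrow> is_word n u \<and> (\<forall>i\<in>{1..<n}. cox_len n u < cox_len n (i # u))"

section \<open>Right action on sign sequences (True = +, indices 1..n)\<close>

definition act_gen :: "nat \<Rightarrow> (nat \<Rightarrow> bool) \<Rightarrow> (nat \<Rightarrow> bool)" where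
  "act_gen i a = (if i = 0 then a(1 := \<not> a 2, 2 := \<not> a 1)
                  else a(i := a (i + 1), i + 1 := a i))"

definition alpha :: "nat list \<Rightarrow> nat \<Rightarrow> bool" where
  "alpha u = fold act_gen u (\<lambda>_. True)"

definition Pts :: "nat \<Rightarrow> int set" where
  "Pts n = {-2 * int n..2 * int n} - {0}"

definition ext_label :: "nat \<Rightarrow> nat list \<Rightarrow> int \<Rightarrow> bool" where
  "ext_label n u j =
     (if j < - int n then True
      else if j > int n then False
      else if j > 0 then alpha u (nat j)
      else \<not> alpha u (nat (- j)))"

definition is_matching :: "nat \<Rightarrow> (int \<Rightarrow> bool) \<Rightarrow> (int \<times> int) set \<Rightarrow> bool" where
  "is_matching n lab M \<longleftrightarrow>
     card M = 2 * n \<and>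
     (\<forall>(a, b)\<in>M. a \<in> Pts n \<and> b \<in> Pts n \<and> a < b \<and> lab a \<and> \<not> lab b) \<and>
     (\<forall>p\<in>Pts n. \<exists>!e\<in>M. fst e = p \<or> snd e = p) \<and>
     (\<forall>(a, b)\<in>M. \<forall>(c, d)\<in>M. \<not> (a < c \<and> c < b \<and> b < d))"

definition matching :: "nat \<Rightarrow> nat list \<Rightarrow> (int \<times> int) set" where
  "matching n u = (THE M. is_matching n (ext_label n u) M)"

definition neg_pos_arcs :: "nat \<Rightarrow> nat list \<Rightarrow> (int \<times> int) set" where
  "neg_pos_arcs n u = {(a, b) \<in> matching n u. a < 0 \<and> 0 < b}"

definition cup_diagram :: "nat \<Rightarrow> nat list \<Rightarrow> (int \<times> int) set" where
  "cup_diagram n u =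
     (let ys = sorted_list_of_set {y. y > 0 \<and> (- y, y) \<in> neg_pos_arcs n u};
          k = length ys div 2
      in (matching n u - neg_pos_arcs n u) \<union>
         (\<Union>i<k. {(- (ys ! (2 * i + 1)), ys ! (2 * i)), (- (ys ! (2 * i)), ys ! (2 * i + 1))}))"

end

theory Submission
  imports Defs
begin
lemma cox_eq_ctx: "cox_eq n x y \<Longrightarrow> cox_eq n (u @ x @ w) (u @ y @ w)"
proof (induction rule: cox_eq.induct)
  case (cox_refl a) then show ?case by (rule cox_eq.cox_refl)
next
  case (cox_sym a b) from cox_sym.IH show ?case by (rule cox_eq.cox_sym)
next
  case (cox_trans a b c) from cox_trans.IH show ?case by (rule cox_eq.cox_trans)
next
  case (cox_rel i j a b)
  from cox_eq.cox_rel[OF cox_rel(1,2), of "u @ a" "b @ w"] show ?case by simp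
qed

lemma cox_ii: "i < n \<Longrightarrow> cox_eq n [i,i] []"
  using cox_eq.cox_rel[of i n i "[]" "[]"] by (simp add: relator_def cox_m_def)

lemma cox_comm:
  assumes "cox_m n i j = 2" "i < n" "j < n"
  shows "cox_eq n [i,j] [j,i]"
proof -
  have r: "relator n i j = [i,j,i,j]" using assms(1) by (simp add: relator_def numeral_2_eq_2)
  have 1: "cox_eq n [j,i] ([i,i] @ [j,i])"
    using cox_eq_ctx[OF cox_ii[OF assms(2)], of "[]" "[j,i]"] by (simp add: cox_eq.cox_sym)
  have 2: "cox_eq n ([i,i,j,i]) ([i,i,j,i] @ [j,j])"
    using cox_eq_ctx[OF cox_ii[OF assms(3)], of "[i,i,j,i]" "[]"] by (simp add: cox_eq.cox_sym)
  have 3: "cox_eq n ([i] @ relator n i j @ [j]) ([i] @ [j])"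
    by (rule cox_eq.cox_rel[OF assms(2,3)])
  have "cox_eq n [j,i] [i,j]"
    using 1 2 3 r by (auto intro: cox_eq.cox_trans)
  then show ?thesis by (rule cox_eq.cox_sym)
qed

lemma cox_braid:
  assumes "cox_m n i j = 3" "i < n" "j < n"
  shows "cox_eq n [i,j,i] [j,i,j]"
proof -
  have r: "relator n i j = [i,j,i,j,i,j]" using assms(1) by (simp add: relator_def numeral_3_eq_3)
  have 1: "cox_eq n [j,i,j] ([i,j,i,j,i,j] @ [j,i,j])"
    using cox_eq.cox_rel[OF assms(2,3), of "[]" "[j,i,j]"] r by (simp add: cox_eq.cox_sym)
  have 2: "cox_eq n ([i,j,i,j,i] @ [j,j] @ [i,j]) ([i,j,i,j,i] @ [] @ [i,j])"
    by (rule cox_eq_ctx[OF cox_ii[OF assms(3)]])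
  have 3: "cox_eq n ([i,j,i,j] @ [i,i] @ [j]) ([i,j,i,j] @ [] @ [j])"
    by (rule cox_eq_ctx[OF cox_ii[OF assms(2)]])
  have 4: "cox_eq n ([i,j,i] @ [j,j] @ []) ([i,j,i] @ [] @ [])"
    by (rule cox_eq_ctx[OF cox_ii[OF assms(3)]])
  have "cox_eq n [j,i,j] [i,j,i]"
    using 1 2 3 4 by (auto intro: cox_eq.cox_trans)
  then show ?thesis by (rule cox_eq.cox_sym)
qed

lemma act_gen_apply:
  "act_gen i a x = (if i = 0 then (if x = 2 then \<not> a 1 else if x = 1 then \<not> a 2 else a x)
                    else (if x = i+1 then a i else if x = i then a (i+1) else a x))"
  by (simp add: act_gen_def)

lemma act_invol: "act_gen i (act_gen i a) = a"
  by (rule ext) (simp add: act_gen_apply)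

lemma cox_m_cases: "cox_m n i j = 1 \<or> cox_m n i j = 2 \<or> cox_m n i j = 3"
  by (simp add: cox_m_def)

lemma cox_m_1: "cox_m n i j = 1 \<Longrightarrow> i = j"
  by (simp add: cox_m_def split: if_splits)

definition br3 :: "nat \<Rightarrow> nat \<Rightarrow> bool" where
  "br3 i j \<longleftrightarrow> (i=0\<and>j=2 \<or> i=2\<and>j=0 \<or> i=1\<and>j=2 \<or> i=2\<and>j=1 \<or> (2\<le>i \<and> j=i+1) \<or> (2 \<le> j \<and> i = j+1))"

lemma cox_m3_iff: "i < n \<Longrightarrow> j < n \<Longrightarrow> cox_m n i j = 3 \<longleftrightarrow> br3 i j"
  unfolding br3_def by (auto simp: cox_m_def doubleton_eq_iff min_def max_def)

lemma cox_m2_iff: "i < n \<Longrightarrow> j < n \<Longrightarrow> cox_m n i j = 2 \<longleftrightarrow> i \<noteq> j \<and> \<not> br3 i j"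
  unfolding br3_def by (auto simp: cox_m_def doubleton_eq_iff min_def max_def)

lemma act_comm_aux:
  assumes "i \<noteq> j" "\<not> br3 i j" "i \<le> j"
  shows "act_gen i (act_gen j a) = act_gen j (act_gen i a)"
proof -
  have d: "i = 0 \<and> j = 1 \<or> i = 0 \<and> 3 \<le> j \<or> 1 \<le> i \<and> i + 2 \<le> j"
    using assms unfolding br3_def by presburger
  consider "i = 0" "j = 1" | "i = 0" "3 \<le> j" | "1 \<le> i" "i + 2 \<le> j"
    using d by blast
  then show ?thesis
  proof cases
    case 1 then show ?thesis by (intro ext) (simp add: act_gen_apply numeral_2_eq_2)
  next
    case 2 then show ?thesis by (intro ext) (simp add: act_gen_apply)
  next
    case 3 then show ?thesis by (intro ext) (simp add: act_gen_apply)
  qed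
qed

lemma act_comm:
  assumes "i \<noteq> j" "\<not> br3 i j"
  shows "act_gen i (act_gen j a) = act_gen j (act_gen i a)"
proof (cases "i \<le> j")
  case True then show ?thesis using act_comm_aux assms by blast
next
  case False
  have "\<not> br3 j i" using assms(2) by (auto simp: br3_def)
  then show ?thesis using act_comm_aux[of j i a] assms False by auto
qed

lemma act_braid:
  assumes "br3 i j"
  shows "act_gen j (act_gen i (act_gen j (act_gen i (act_gen j (act_gen i a))))) = a"
proof -
  have c: "i=0\<and>j=2 \<or> i=2\<and>j=0 \<or> i=1\<and>j=2 \<or> i=2\<and>j=1 \<or> (2\<le>i \<and> j=i+1) \<or> (2 \<le> j \<and> i = j+1)"
    using assms by (simp add: br3_def)
  have b1: "act_gen 2 (act_gen 0 (act_gen 2 (act_gen 0 (act_gen 2 (act_gen 0 a))))) = a"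
    by (rule ext) (simp add: act_gen_apply numeral_2_eq_2)
  have b2: "act_gen 0 (act_gen 2 (act_gen 0 (act_gen 2 (act_gen 0 (act_gen 2 a))))) = a"
    by (rule ext) (simp add: act_gen_apply numeral_2_eq_2)
  have b3: "act_gen 2 (act_gen 1 (act_gen 2 (act_gen 1 (act_gen 2 (act_gen 1 a))))) = a"
    by (rule ext) (simp add: act_gen_apply numeral_2_eq_2)
  have b4: "act_gen 1 (act_gen 2 (act_gen 1 (act_gen 2 (act_gen 1 (act_gen 2 a))))) = a"
    by (rule ext) (simp add: act_gen_apply numeral_2_eq_2)
  have b5: "act_gen (k+1) (act_gen k (act_gen (k+1) (act_gen k (act_gen (k+1) (act_gen k a))))) = a" if "2 \<le> k" for k
    using that by (intro ext) (simp add: act_gen_apply)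
  have b6: "act_gen k (act_gen (k+1) (act_gen k (act_gen (k+1) (act_gen k (act_gen (k+1) a))))) = a" if "2 \<le> k" for k
    using that by (intro ext) (simp add: act_gen_apply)
  show ?thesis using c b1 b2 b3 b4 b5 b6 by auto
qed

lemma fold_concat_replicate: "fold f (concat (replicate m xs)) = (fold f xs) ^^ m"
  by (induction m) (simp_all add: funpow_Suc_right funpow_swap1)

lemma relator_act:
  assumes "i < n" "j < n"
  shows "fold act_gen (relator n i j) a = a"
proof -
  consider "cox_m n i j = 1" | "cox_m n i j = 2" | "cox_m n i j = 3" using cox_m_cases by blast
  then show ?thesis
  proof cases
    case 1 then have "i = j" by (rule cox_m_1)
    then show ?thesis using 1 by (simp add: relator_def act_invol)
  next
    case 2
    then have "i \<noteq> j" "\<not> br3 i j" using cox_m2_iff assms by auto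
    then have "act_gen i (act_gen j (act_gen i a)) = act_gen j (act_gen i (act_gen i a))"
      by (rule act_comm)
    then show ?thesis using 2 by (simp add: relator_def numeral_2_eq_2 act_invol)
  next
    case 3
    then have "br3 i j" using cox_m3_iff assms by auto
    then show ?thesis using 3 by (simp add: relator_def numeral_3_eq_3 act_braid)
  qed
qed

lemma alpha_append: "alpha (u @ v) = fold act_gen v (alpha u)"
  by (simp add: alpha_def)

lemma cox_eq_fold: "cox_eq n u v \<Longrightarrow> fold act_gen u a = fold act_gen v a"
  by (induction rule: cox_eq.induct) (simp_all add: relator_act)

lemma cox_eq_alpha: "cox_eq n u v \<Longrightarrow> alpha u = alpha v"
  unfolding alpha_def by (rule cox_eq_fold)

lemma cox_eq_word: "cox_eq n u v \<Longrightarrow> is_word n u \<longleftrightarrow> is_word n v"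
proof (induction rule: cox_eq.induct)
  case (cox_rel i j a b)
  have "set (relator n i j) \<subseteq> {..<n}" using cox_rel(1,2)
    by (auto simp: relator_def)
  then show ?case by (auto simp: is_word_def)
qed blast+

section \<open>Canonical words\<close>

definition dn :: "nat \<Rightarrow> (nat \<Rightarrow> bool) \<Rightarrow> nat \<Rightarrow> bool" where
  "dn n a i \<longleftrightarrow> i < n \<and> (if i = 0 then \<not> a 1 \<and> \<not> a 2 else a i \<and> \<not> a (i+1))"

definition up :: "nat \<Rightarrow> (nat \<Rightarrow> bool) \<Rightarrow> nat \<Rightarrow> bool" where
  "up n a i \<longleftrightarrow> i < n \<and> (if i = 0 then a 1 \<and> a 2 else \<not> a i \<and> a (i+1))"

definition Lf :: "nat \<Rightarrow> (nat \<Rightarrow> bool) \<Rightarrow> nat" where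
  "Lf n a = (\<Sum>m\<in>{1..n}. if a m then 0 else m - 1)"

definition pc :: "nat \<Rightarrow> (nat \<Rightarrow> bool) \<Rightarrow> nat" where
  "pc n a = (\<Sum>m\<in>{1..n}. if a m then 0 else 1)"

definition valid :: "nat \<Rightarrow> (nat \<Rightarrow> bool) \<Rightarrow> bool" where
  "valid n a \<longleftrightarrow> a 0 \<and> (\<forall>m>n. a m) \<and> even (pc n a)"

function cw :: "nat \<Rightarrow> (nat \<Rightarrow> bool) \<Rightarrow> nat list" where
  "cw n a = (if \<exists>d. dn n a d \<and> Lf n (act_gen d a) < Lf n a
             then (let d = (LEAST d. dn n a d \<and> Lf n (act_gen d a) < Lf n a)
                   in cw n (act_gen d a) @ [d])
             else [])"
  by pat_completeness auto
termination
proof (relation "measure (\<lambda>(n,a). Lf n a)")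
  fix n a x
  assume "\<exists>d. dn n a d \<and> Lf n (act_gen d a) < Lf n a"
    and "x = (LEAST d. dn n a d \<and> Lf n (act_gen d a) < Lf n a)"
  then show "((n, act_gen x a), n, a) \<in> measure (\<lambda>(n, a). Lf n a)"
    by (metis (mono_tags, lifting) LeastI_ex case_prod_conv in_measure)
qed auto

declare cw.simps[simp del]

lemma sum_change2:
  fixes f g :: "nat \<Rightarrow> nat"
  assumes "finite A" "i \<in> A" "j \<in> A" "i \<noteq> j" "\<And>x. x \<in> A \<Longrightarrow> x \<noteq> i \<Longrightarrow> x \<noteq> j \<Longrightarrow> g x = f x"
  shows "sum g A + f i + f j = sum f A + g i + g j"
proof -
  have e: "sum g (A - {i} - {j}) = sum f (A - {i} - {j})"
    using assms(5) by (intro sum.cong) auto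
  have "sum g A = g i + (g j + sum g (A - {i} - {j}))"
    using assms(1-4) by (simp add: sum.remove[of A i] sum.remove[of "A - {i}" j])
  moreover have "sum f A = f i + (f j + sum f (A - {i} - {j}))"
    using assms(1-4) by (simp add: sum.remove[of A i] sum.remove[of "A - {i}" j])
  ultimately show ?thesis using e by simp
qed

lemma dn_L:
  assumes "2 \<le> n" "dn n a i"
  shows "Lf n (act_gen i a) + 1 = Lf n a"
proof (cases "i = 0")
  case True
  have a: "\<not> a 1" "\<not> a 2" using assms True by (auto simp: dn_def)
  have "Lf n (act_gen i a) + (if a 1 then 0 else 1 - 1) + (if a 2 then 0 else 2 - 1)
        = Lf n a + (if act_gen i a 1 then 0 else 1 - 1) + (if act_gen i a 2 then 0 else 2 - 1)"
    unfolding Lf_def using assms(1) True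
    by (intro sum_change2) (auto simp: act_gen_apply)
  then show ?thesis using a True by (simp add: act_gen_apply)
next
  case False
  have a: "a i" "\<not> a (i+1)" "i < n" using assms False by (auto simp: dn_def)
  have "Lf n (act_gen i a) + (if a i then 0 else i - 1) + (if a (i+1) then 0 else (i+1) - 1)
        = Lf n a + (if act_gen i a i then 0 else i - 1) + (if act_gen i a (i+1) then 0 else (i+1) - 1)"
    unfolding Lf_def using a False
    by (intro sum_change2) (auto simp: act_gen_apply)
  then show ?thesis using a False by (simp add: act_gen_apply)
qed

lemma up_dn: "up n a i \<Longrightarrow> dn n (act_gen i a) i"
  by (auto simp: up_def dn_def act_gen_apply)

lemma stay: "i < n \<Longrightarrow> \<not> dn n a i \<Longrightarrow> \<not> up n a i \<Longrightarrow> act_gen i a = a"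
  by (rule ext) (auto simp: up_def dn_def act_gen_apply)

lemma dn_moves: "dn n a i \<Longrightarrow> act_gen i a \<noteq> a"
  by (auto simp: dn_def act_gen_apply fun_eq_iff split: if_splits)

lemma valid_act:
  assumes "2 \<le> n" "valid n a" "i < n"
  shows "valid n (act_gen i a)"
proof -
  have p: "even (pc n (act_gen i a))"
  proof (cases "i = 0")
    case True
    have "pc n (act_gen i a) + (if a 1 then 0 else 1) + (if a 2 then 0 else 1)
        = pc n a + (if act_gen i a 1 then 0 else 1) + (if act_gen i a 2 then 0 else 1)"
      unfolding pc_def using assms(1) True
      by (intro sum_change2) (auto simp: act_gen_apply)
    moreover have "act_gen i a 1 = (\<not> a 2)" "act_gen i a 2 = (\<not> a 1)"
      using True by (simp_all add: act_gen_apply)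
    moreover have "even (pc n a)" using assms(2) by (simp add: valid_def)
    ultimately show ?thesis by (simp split: if_splits; presburger)
  next
    case False
    have "pc n (act_gen i a) + (if a i then 0 else 1) + (if a (i+1) then 0 else 1)
        = pc n a + (if act_gen i a i then 0 else 1) + (if act_gen i a (i+1) then 0 else 1)"
      unfolding pc_def using assms(3) False
      by (intro sum_change2) (auto simp: act_gen_apply)
    moreover have "act_gen i a i = a (i+1)" "act_gen i a (i+1) = a i"
      using False by (simp_all add: act_gen_apply)
    moreover have "even (pc n a)" using assms(2) by (simp add: valid_def)
    ultimately show ?thesis by (simp split: if_splits; presburger)
  qed
  show ?thesis using assms p by (auto simp: valid_def act_gen_apply)
qed

lemma valid_alpha: "2 \<le> n \<Longrightarrow> is_word n u \<Longrightarrow> valid n (alpha u)"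
proof (induction u rule: rev_induct)
  case Nil
  then show ?case by (simp add: alpha_def valid_def pc_def)
next
  case (snoc x xs)
  then have "is_word n xs" "x < n" by (auto simp: is_word_def)
  then show ?case using snoc valid_act by (simp add: alpha_append)
qed

lemma no_down:
  assumes "2 \<le> n" "valid n a" "\<not> (\<exists>d. dn n a d)"
  shows "a = (\<lambda>_. True)"
proof -
  have "\<not> dn n a 0" using assms(3) by blast
  then have a1: "a 1 \<or> a 2" using assms(1) by (simp add: dn_def)
  have a2: "a 2"
  proof (rule ccontr)
    assume "\<not> a 2"
    then have "dn n a 1" using a1 assms(1) by (simp add: dn_def numeral_2_eq_2)
    then show False using assms(3) by blast
  qed
  have a3: "a m" if "3 \<le> m" for m
  proof (rule ccontr)
    assume nm: "\<not> a m"
    define m0 where "m0 = (LEAST k. 3 \<le> k \<and> \<not> a k)"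
    have m0: "3 \<le> m0" "\<not> a m0" using LeastI[of "\<lambda>k. 3 \<le> k \<and> \<not> a k" m] that nm
      by (auto simp: m0_def)
    have "m0 \<le> n" using m0 assms(2) by (auto simp: valid_def not_le[symmetric])
    have "a (m0 - 1)"
    proof (cases "m0 = 3")
      case True then show ?thesis using a2 by simp
    next
      case False
      then have "3 \<le> m0 - 1" using m0 by simp
      moreover have "m0 - 1 < m0" using m0 by simp
      ultimately show ?thesis using not_less_Least[of "m0 - 1" "\<lambda>k. 3 \<le> k \<and> \<not> a k"]
        by (auto simp: m0_def)
    qed
    then have "dn n a (m0 - 1)" using m0 \<open>m0 \<le> n\<close> by (auto simp: dn_def)
    then show False using assms(3) by blast
  qed
  have a0: "a 1"
  proof (rule ccontr)
    assume n1: "\<not> a 1"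
    have "pc n a = (if a 1 then 0 else 1) + (\<Sum>m\<in>{1..n} - {1}. if a m then 0 else 1)"
      unfolding pc_def using assms(1) by (subst sum.remove[of _ 1]) auto
    also have "(\<Sum>m\<in>{1..n} - {1}. if a m then 0 else (1::nat)) = 0"
    proof (intro sum.neutral ballI)
      fix m assume "m \<in> {1..n} - {1}"
      then have "m = 2 \<or> 3 \<le> m" by auto
      then show "(if a m then 0 else 1) = (0::nat)" using a2 a3 by auto
    qed
    finally have "pc n a = 1" using n1 by simp
    then show False using assms(2) by (simp add: valid_def)
  qed
  show ?thesis
  proof (rule ext)
    fix m
    show "a m = True"
      using a0 a2 a3 assms(2) by (cases "m = 0 \<or> m = 1 \<or> m = 2") (auto simp: valid_def)
  qed
qed

lemma cw_step:
  assumes "2 \<le> n" "dn n a i"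
  shows "\<exists>d. dn n a d \<and> cw n a = cw n (act_gen d a) @ [d]"
proof -
  have ex: "\<exists>d. dn n a d \<and> Lf n (act_gen d a) < Lf n a"
    using assms dn_L[OF assms] by (intro exI[of _ i]) auto
  define d where "d = (LEAST d. dn n a d \<and> Lf n (act_gen d a) < Lf n a)"
  have "dn n a d" using LeastI_ex[OF ex] by (simp add: d_def)
  moreover have "cw n a = cw n (act_gen d a) @ [d]"
    using ex by (subst cw.simps) (simp add: d_def Let_def)
  ultimately show ?thesis by blast
qed

lemma cw_base:
  assumes "\<not> (\<exists>d. dn n a d)"
  shows "cw n a = []"
  using assms by (subst cw.simps) auto

lemma cw_len:
  assumes "2 \<le> n" "valid n a"
  shows "length (cw n a) = Lf n a"
  using assms(2)
proof (induction "Lf n a" arbitrary: a rule: less_induct)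
  case less
  show ?case
  proof (cases "\<exists>d. dn n a d")
    case True
    then obtain i where "dn n a i" by blast
    from cw_step[OF assms(1) this] obtain d where d: "dn n a d" "cw n a = cw n (act_gen d a) @ [d]"
      by blast
    have L: "Lf n (act_gen d a) + 1 = Lf n a" by (rule dn_L[OF assms(1) d(1)])
    have "d < n" using d by (simp add: dn_def)
    have "length (cw n (act_gen d a)) = Lf n (act_gen d a)"
      using less L valid_act[OF assms(1) less.prems \<open>d < n\<close>] by auto
    then show ?thesis using d L by simp
  next
    case False
    then have "a = (\<lambda>_. True)" using no_down assms(1) less.prems by blast
    then show ?thesis using cw_base[OF False] by (simp add: Lf_def)
  qed
qed

lemma stay_iff: "act_gen i a = a \<longleftrightarrow> (if i = 0 then a 1 \<noteq> a 2 else a i = a (i+1))"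
proof
  assume h: "act_gen i a = a"
  show "(if i = 0 then a 1 \<noteq> a 2 else a i = a (i+1))"
  proof (cases "i = 0")
    case True
    have "act_gen i a 1 = a 1" using h by simp
    then show ?thesis using True by (auto simp: act_gen_apply)
  next
    case False
    have "act_gen i a i = a i" using h by simp
    then show ?thesis using False by (auto simp: act_gen_apply)
  qed
next
  assume "(if i = 0 then a 1 \<noteq> a 2 else a i = a (i+1))"
  then show "act_gen i a = a" by (intro ext) (auto simp: act_gen_apply split: if_splits)
qed

lemma dn_dn:
  assumes "dn n a i" "dn n a d" "i \<noteq> d"
  shows "\<not> br3 i d \<and> dn n (act_gen d a) i"
proof (cases "i = 0 \<or> d = 0")
  case True
  then show ?thesis using assms
    by (auto simp: dn_def br3_def act_gen_apply numeral_2_eq_2)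
next
  case False
  then have "i \<noteq> d + 1" "d \<noteq> i + 1" using assms by (auto simp: dn_def)
  then show ?thesis using assms False
    by (auto simp: dn_def br3_def act_gen_apply)
qed

lemma br3_sym: "br3 i j = br3 j i"
  by (auto simp: br3_def)

lemma br3_situation:
  assumes "dn n a d" "act_gen i a = a" "i < n" "br3 d i"
  shows "dn n (act_gen d a) i \<and> act_gen d (act_gen i (act_gen d a)) = act_gen i (act_gen d a)"
proof -
  have s: "if i = 0 then a 1 \<noteq> a 2 else a i = a (i+1)" using assms(2) stay_iff by blast
  have dd: "d < n" "if d = 0 then \<not> a 1 \<and> \<not> a 2 else a d \<and> \<not> a (d+1)" using assms(1) by (auto simp: dn_def)
  have c: "d=0\<and>i=2 \<or> d=2\<and>i=0 \<or> d=1\<and>i=2 \<or> d=2\<and>i=1 \<or> (2\<le>d \<and> i=d+1) \<or> (2 \<le> i \<and> d = i+1)"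
    using assms(4) by (simp add: br3_def)
  then show ?thesis
  proof (elim disjE conjE)
    assume "d = 0" "i = 2" then show ?thesis using s dd assms(3)
      by (simp add: dn_def stay_iff act_gen_apply)
  next
    assume "d = 2" "i = 0" then show ?thesis using s dd assms(3)
      by (simp add: dn_def stay_iff act_gen_apply)
  next
    assume "d = 1" "i = 2" then show ?thesis using s dd assms(3)
      by (simp add: dn_def stay_iff act_gen_apply numeral_2_eq_2)
  next
    assume "d = 2" "i = 1" then show ?thesis using s dd assms(3)
      by (simp add: dn_def stay_iff act_gen_apply numeral_2_eq_2)
  next
    assume "2 \<le> d" "i = d + 1" then show ?thesis using s dd assms(3)
      by (simp add: dn_def stay_iff act_gen_apply)
  next
    assume "2 \<le> i" "d = i + 1" then show ?thesis using s dd assms(3)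
      by (simp add: dn_def stay_iff act_gen_apply)
  qed
qed

lemma cw_down:
  assumes "2 \<le> n" "dn n a i"
  shows "cox_eq n (cw n a) (cw n (act_gen i a) @ [i])"
  using assms(2)
proof (induction "Lf n a" arbitrary: a i rule: less_induct)
  case less
  from cw_step[OF assms(1) less.prems] obtain d where
    d: "dn n a d" "cw n a = cw n (act_gen d a) @ [d]" by blast
  show ?case
  proof (cases "d = i")
    case True then show ?thesis using d by (simp add: cox_eq.cox_refl)
  next
    case False
    have dd: "\<not> br3 i d" "dn n (act_gen d a) i" using dn_dn[OF less.prems d(1)] False by auto
    have di: "dn n (act_gen i a) d" using dn_dn[OF d(1) less.prems] False by auto
    have comm: "act_gen i (act_gen d a) = act_gen d (act_gen i a)"
      using act_comm[of i d] dd(1) False by auto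
    have lt: "i < n" "d < n" using less.prems d(1) by (auto simp: dn_def)
    have c2: "cox_m n i d = 2" using cox_m2_iff[OF lt] dd(1) False by auto
    have L1: "Lf n (act_gen d a) < Lf n a" using dn_L[OF assms(1) d(1)] by simp
    have L2: "Lf n (act_gen i a) < Lf n a" using dn_L[OF assms(1) less.prems] by simp
    have IH1: "cox_eq n (cw n (act_gen d a)) (cw n (act_gen i (act_gen d a)) @ [i])"
      using less.hyps[OF L1 dd(2)] .
    have IH2: "cox_eq n (cw n (act_gen i a)) (cw n (act_gen d (act_gen i a)) @ [d])"
      using less.hyps[OF L2 di] .
    have s1: "cox_eq n (cw n (act_gen d a) @ [d]) (cw n (act_gen i (act_gen d a)) @ [i,d])"
      using cox_eq_ctx[OF IH1, of "[]" "[d]"] by simp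
    have s2: "cox_eq n (cw n (act_gen i (act_gen d a)) @ [i,d]) (cw n (act_gen d (act_gen i a)) @ [d,i])"
      using cox_eq_ctx[OF cox_comm[OF c2 lt], of "cw n (act_gen i (act_gen d a))" "[]"] comm by simp
    have s3: "cox_eq n (cw n (act_gen d (act_gen i a)) @ [d,i]) (cw n (act_gen i a) @ [i])"
      using cox_eq_ctx[OF cox_eq.cox_sym[OF IH2], of "[]" "[i]"] by simp
    show ?thesis using d(2) s1 s2 s3 by (metis cox_eq.cox_trans)
  qed
qed

lemma cw_stay:
  assumes "2 \<le> n" "valid n a" "i < n" "act_gen i a = a"
  shows "\<exists>j. 1 \<le> j \<and> j < n \<and> cox_eq n (cw n a @ [i]) (j # cw n a)"
  using assms(2,3,4)
proof (induction "Lf n a" arbitrary: a i rule: less_induct)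
  case less
  show ?case
  proof (cases "\<exists>d. dn n a d")
    case False
    then have a: "a = (\<lambda>_. True)" using no_down assms(1) less.prems by blast
    have "i \<noteq> 0"
    proof
      assume "i = 0"
      then have "act_gen i a 1 = False" using a by (simp add: act_gen_apply)
      then show False using less.prems(3) a by simp
    qed
    then show ?thesis using cw_base[OF False] less.prems(2)
      by (intro exI[of _ i]) (simp add: cox_eq.cox_refl)
  next
    case True
    then obtain i0 where "dn n a i0" by blast
    from cw_step[OF assms(1) this] obtain d where
      d: "dn n a d" "cw n a = cw n (act_gen d a) @ [d]" by blast
    have "d \<noteq> i" using dn_moves[OF d(1)] less.prems(3) by auto
    have lt: "d < n" using d(1) by (simp add: dn_def)
    have L1: "Lf n (act_gen d a) < Lf n a" using dn_L[OF assms(1) d(1)] by simp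
    have v1: "valid n (act_gen d a)" using valid_act[OF assms(1) less.prems(1) lt] .
    show ?thesis
    proof (cases "br3 d i")
      case False
      have comm: "act_gen i (act_gen d a) = act_gen d a"
        using act_comm[of i d a] False \<open>d \<noteq> i\<close> less.prems(3) br3_sym by metis
      obtain j where j: "1 \<le> j" "j < n" "cox_eq n (cw n (act_gen d a) @ [i]) (j # cw n (act_gen d a))"
        using less.hyps[OF L1 v1 less.prems(2) comm] by blast
      have c2: "cox_m n d i = 2" using cox_m2_iff[OF lt less.prems(2)] False \<open>d \<noteq> i\<close> by auto
      have s1: "cox_eq n (cw n (act_gen d a) @ [d, i]) (cw n (act_gen d a) @ [i, d])"
        using cox_eq_ctx[OF cox_comm[OF c2 lt less.prems(2)], of "cw n (act_gen d a)" "[]"] by simp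
      have s2: "cox_eq n (cw n (act_gen d a) @ [i, d]) (j # cw n (act_gen d a) @ [d])"
        using cox_eq_ctx[OF j(3), of "[]" "[d]"] by simp
      show ?thesis using j(1,2) s1 s2 d(2) by (auto intro: cox_eq.cox_trans)
    next
      case True
      define b where "b = act_gen d a"
      define g where "g = act_gen i b"
      have bs: "dn n b i" "act_gen d g = g"
        using br3_situation[OF d(1) less.prems(3) less.prems(2) True] by (auto simp: b_def g_def)
      have c3: "cox_m n i d = 3" using cox_m3_iff[OF less.prems(2) lt] True br3_sym by auto
      have Lb: "Lf n b < Lf n a" using L1 by (simp add: b_def)
      have Lg: "Lf n g < Lf n a" using dn_L[OF assms(1) bs(1)] Lb by (simp add: g_def)
      have vb: "valid n b" using v1 by (simp add: b_def)
      have vg: "valid n g" using valid_act[OF assms(1) vb less.prems(2)] by (simp add: g_def)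
      have down: "cox_eq n (cw n b) (cw n g @ [i])" using cw_down[OF assms(1) bs(1)] by (simp add: g_def)
      obtain j where j: "1 \<le> j" "j < n" "cox_eq n (cw n g @ [d]) (j # cw n g)"
        using less.hyps[OF Lg vg lt bs(2)] by blast
      have s1: "cox_eq n (cw n b @ [d, i]) (cw n g @ [i, d, i])"
        using cox_eq_ctx[OF down, of "[]" "[d,i]"] by simp
      have s2: "cox_eq n (cw n g @ [i, d, i]) (cw n g @ [d, i, d])"
        using cox_eq_ctx[OF cox_braid[OF c3 less.prems(2) lt], of "cw n g" "[]"] by simp
      have s3: "cox_eq n (cw n g @ [d, i, d]) (j # cw n g @ [i, d])"
        using cox_eq_ctx[OF j(3), of "[]" "[i,d]"] by simp
      have s4: "cox_eq n (j # cw n g @ [i, d]) (j # cw n b @ [d])"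
        using cox_eq_ctx[OF cox_eq.cox_sym[OF down], of "[j]" "[d]"] by simp
      have "cox_eq n (cw n b @ [d, i]) (j # cw n b @ [d])"
        using s1 s2 s3 s4 by (metis cox_eq.cox_trans)
      then show ?thesis using j(1,2) d(2) by (auto simp: b_def)
    qed
  qed
qed

lemma cw_trans:
  assumes "2 \<le> n" "valid n a" "i < n"
  shows "\<exists>q. set q \<subseteq> {1..<n} \<and> cox_eq n (cw n a @ [i]) (q @ cw n (act_gen i a))
             \<and> length q + length (cw n (act_gen i a)) \<le> length (cw n a) + 1"
proof -
  have va: "valid n (act_gen i a)" using valid_act[OF assms] .
  consider "dn n a i" | "up n a i" | "\<not> dn n a i" "\<not> up n a i" by blast
  then show ?thesis
  proof cases
    case 1
    have L: "Lf n (act_gen i a) + 1 = Lf n a" using dn_L[OF assms(1) 1] .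
    have s1: "cox_eq n (cw n a @ [i]) (cw n (act_gen i a) @ [i,i])"
      using cox_eq_ctx[OF cw_down[OF assms(1) 1], of "[]" "[i]"] by simp
    have s2: "cox_eq n (cw n (act_gen i a) @ [i,i]) (cw n (act_gen i a))"
      using cox_eq_ctx[OF cox_ii[OF assms(3)], of "cw n (act_gen i a)" "[]"] by simp
    show ?thesis using s1 s2 L cw_len[OF assms(1) va] cw_len[OF assms(1,2)]
      by (intro exI[of _ "[]"]) (auto intro: cox_eq.cox_trans)
  next
    case 2
    have d: "dn n (act_gen i a) i" using up_dn[OF 2] .
    have L: "Lf n a + 1 = Lf n (act_gen i a)" using dn_L[OF assms(1) d] by (simp add: act_invol)
    have s: "cox_eq n (cw n (act_gen i a)) (cw n a @ [i])"
      using cw_down[OF assms(1) d] by (simp add: act_invol)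
    show ?thesis using cox_eq.cox_sym[OF s] L cw_len[OF assms(1) va] cw_len[OF assms(1,2)]
      by (intro exI[of _ "[]"]) auto
  next
    case 3
    have st: "act_gen i a = a" using stay[OF assms(3) 3] .
    obtain j where j: "1 \<le> j" "j < n" "cox_eq n (cw n a @ [i]) (j # cw n a)"
      using cw_stay[OF assms st] by blast
    show ?thesis using j st by (intro exI[of _ "[j]"]) auto
  qed
qed

lemma decomp:
  assumes "2 \<le> n"
  shows "is_word n v \<Longrightarrow> \<exists>p. set p \<subseteq> {1..<n} \<and> cox_eq n v (p @ cw n (alpha v))
           \<and> length p + length (cw n (alpha v)) \<le> length v"
proof (induction v rule: rev_induct)
  case Nil
  have "cw n (\<lambda>_. True) = []" by (rule cw_base) (simp add: dn_def)
  then show ?case by (intro exI[of _ "[]"]) (simp add: alpha_def cox_eq.cox_refl)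
next
  case (snoc x xs)
  then have w: "is_word n xs" "x < n" by (auto simp: is_word_def)
  obtain p where p: "set p \<subseteq> {1..<n}" "cox_eq n xs (p @ cw n (alpha xs))"
      "length p + length (cw n (alpha xs)) \<le> length xs"
    using snoc.IH[OF w(1)] by blast
  have va: "valid n (alpha xs)" using valid_alpha[OF assms w(1)] .
  obtain q where q: "set q \<subseteq> {1..<n}" "cox_eq n (cw n (alpha xs) @ [x]) (q @ cw n (act_gen x (alpha xs)))"
     "length q + length (cw n (act_gen x (alpha xs))) \<le> length (cw n (alpha xs)) + 1"
    using cw_trans[OF assms va w(2)] by blast
  have al: "alpha (xs @ [x]) = act_gen x (alpha xs)" by (simp add: alpha_append)
  have s1: "cox_eq n (xs @ [x]) (p @ cw n (alpha xs) @ [x])"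
    using cox_eq_ctx[OF p(2), of "[]" "[x]"] by simp
  have s2: "cox_eq n (p @ cw n (alpha xs) @ [x]) (p @ q @ cw n (act_gen x (alpha xs)))"
    using cox_eq_ctx[OF q(2), of p "[]"] by simp
  show ?case using p q s1 s2 al
    by (intro exI[of _ "p @ q"]) (auto intro: cox_eq.cox_trans)
qed

lemma inWp_canon:
  assumes "2 \<le> n" "in_Wp n u"
  shows "cox_eq n u (cw n (alpha u))"
proof -
  have wu: "is_word n u" using assms(2) by (simp add: in_Wp_def)
  have ex: "\<exists>k v. cox_eq n u v \<and> length v = k" using cox_eq.cox_refl by blast
  obtain v where v: "cox_eq n u v" "length v = cox_len n u"
    using LeastI_ex[OF ex] unfolding cox_len_def by blast
  have wv: "is_word n v" using cox_eq_word[OF v(1)] wu by simp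
  have av: "alpha v = alpha u" using cox_eq_alpha[OF v(1)] by simp
  obtain p where p: "set p \<subseteq> {1..<n}" "cox_eq n v (p @ cw n (alpha v))"
      "length p + length (cw n (alpha v)) \<le> length v"
    using decomp[OF assms(1) wv] by blast
  show ?thesis
  proof (cases p)
    case Nil
    then show ?thesis using v(1) p(2) av by (auto intro: cox_eq.cox_trans)
  next
    case (Cons i p')
    have i: "i \<in> {1..<n}" using p(1) Cons by auto
    have s1: "cox_eq n ([i] @ u @ []) ([i] @ v @ [])" using cox_eq_ctx[OF v(1)] .
    have s2: "cox_eq n ([i] @ v @ []) ([i] @ (p @ cw n (alpha v)) @ [])" using cox_eq_ctx[OF p(2)] .
    have iln: "i < n" using i by simp
    have s3: "cox_eq n ([] @ [i,i] @ (p' @ cw n (alpha v))) ([] @ [] @ (p' @ cw n (alpha v)))"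
      by (rule cox_eq_ctx[OF cox_ii[OF iln]])
    have "cox_eq n (i # u) (p' @ cw n (alpha v))"
      using s1 s2 s3 Cons by (auto intro: cox_eq.cox_trans)
    then have "cox_len n (i # u) \<le> length (p' @ cw n (alpha v))"
      unfolding cox_len_def by (intro Least_le) blast
    also have "\<dots> < length v" using p(3) Cons by simp
    finally have "cox_len n (i # u) < cox_len n u" using v(2) by simp
    moreover have "cox_len n u < cox_len n (i # u)" using assms(2) i by (simp add: in_Wp_def)
    ultimately show ?thesis by simp
  qed
qed


definition mok :: "int set \<Rightarrow> (int \<Rightarrow> bool) \<Rightarrow> (int \<times> int) set \<Rightarrow> bool" where
  "mok P lab M \<longleftrightarrow>
     (\<forall>(a, b)\<in>M. a \<in> P \<and> b \<in> P \<and> a < b \<and> lab a \<and> \<not> lab b) \<and>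
     (\<forall>p\<in>P. \<exists>!e\<in>M. fst e = p \<or> snd e = p) \<and>
     (\<forall>(a, b)\<in>M. \<forall>(c, d)\<in>M. \<not> (a < c \<and> c < b \<and> b < d))"

lemma mok_parts:
  assumes "mok P lab M"
  shows "\<forall>(a, b)\<in>M. a \<in> P \<and> b \<in> P \<and> a < b \<and> lab a \<and> \<not> lab b"
    "\<forall>p\<in>P. \<exists>!e\<in>M. fst e = p \<or> snd e = p"
    "\<forall>(a, b)\<in>M. \<forall>(c, d)\<in>M. \<not> (a < c \<and> c < b \<and> b < d)"
  using assms unfolding mok_def by (rule conjunct1, rule conjunct1[OF conjunct2], rule conjunct2[OF conjunct2])

lemma mok_arc: "mok P lab M \<Longrightarrow> (a,b) \<in> M \<Longrightarrow> a \<in> P \<and> b \<in> P \<and> a < b \<and> lab a \<and> \<not> lab b"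
  using mok_parts(1)[of P lab M] by fast

lemma mok_nc: "mok P lab M \<Longrightarrow> (a,b) \<in> M \<Longrightarrow> (c,d) \<in> M \<Longrightarrow> \<not> (a < c \<and> c < b \<and> b < d)"
  using mok_parts(3)[of P lab M] by fast

lemma mok_ex1: "mok P lab M \<Longrightarrow> p \<in> P \<Longrightarrow> \<exists>!e\<in>M. fst e = p \<or> snd e = p"
  using mok_parts(2)[of P lab M] by fast

lemma mok_share:
  assumes "mok P lab M" "(a,b) \<in> M" "(c,d) \<in> M" "p \<in> {a,b}" "p \<in> {c,d}"
  shows "a = c \<and> b = d"
proof -
  have "p \<in> P" using mok_arc[OF assms(1,2)] assms(4) by auto
  then have u: "\<exists>!e\<in>M. fst e = p \<or> snd e = p" by (rule mok_ex1[OF assms(1)])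
  have "fst (a,b) = p \<or> snd (a,b) = p" "fst (c,d) = p \<or> snd (c,d) = p" using assms(4,5) by auto
  then have "(a,b) = (c,d)" using ex1_implies_ex u assms(2,3) by (metis (no_types, lifting))
  then show ?thesis by simp
qed

lemma mok_plus:
  assumes "mok P lab M" "p \<in> P" "lab p"
  shows "\<exists>b. (p,b) \<in> M"
proof -
  obtain e where e: "e \<in> M" "fst e = p \<or> snd e = p" using mok_ex1[OF assms(1,2)] by blast
  obtain c d where cd: "e = (c,d)" by (cases e)
  have "\<not> lab d" using mok_arc[OF assms(1)] e(1) cd by blast
  then have "c = p" using e(2) cd assms(3) by auto
  then show ?thesis using e(1) cd by blast
qed

lemma mok_minus:
  assumes "mok P lab M" "p \<in> P" "\<not> lab p"
  shows "\<exists>a. (a,p) \<in> M"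
proof -
  obtain e where e: "e \<in> M" "fst e = p \<or> snd e = p" using mok_ex1[OF assms(1,2)] by blast
  obtain c d where cd: "e = (c,d)" by (cases e)
  have "lab c" using mok_arc[OF assms(1)] e(1) cd by blast
  then have "d = p" using e(2) cd assms(3) by auto
  then show ?thesis using e(1) cd by blast
qed

lemma count1:
  assumes "finite P" "mok P lab M" "(a,b) \<in> M"
  shows "card {y\<in>P. a < y \<and> y < b \<and> lab y} \<le> card {y\<in>P. a < y \<and> y < b \<and> \<not> lab y}"
proof -
  define f where "f y = (SOME z. (y,z) \<in> M)" for y
  have fy: "(y, f y) \<in> M" if "y \<in> P" "lab y" for y
    using someI_ex[OF mok_plus[OF assms(2) that]] by (simp add: f_def)
  show ?thesis
  proof (rule card_inj_on_le)
    show "inj_on f {y\<in>P. a < y \<and> y < b \<and> lab y}"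
    proof (rule inj_onI)
      fix y1 y2 assume "y1 \<in> {y\<in>P. a < y \<and> y < b \<and> lab y}" "y2 \<in> {y\<in>P. a < y \<and> y < b \<and> lab y}" "f y1 = f y2"
      then show "y1 = y2" using mok_share[OF assms(2) fy fy, of y1 y2 "f y1"] by auto
    qed
    show "f ` {y\<in>P. a < y \<and> y < b \<and> lab y} \<subseteq> {y\<in>P. a < y \<and> y < b \<and> \<not> lab y}"
    proof clarify
      fix y assume y: "y \<in> P" "a < y" "y < b" "lab y"
      have arc: "f y \<in> P" "y < f y" "\<not> lab (f y)" using mok_arc[OF assms(2) fy[OF y(1,4)]] by auto
      have "f y \<noteq> b"
      proof
        assume "f y = b"
        then have "a = y" using mok_share[OF assms(2) assms(3) fy[OF y(1,4)], of b] by auto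
        then show False using y by simp
      qed
      moreover have "\<not> b < f y" using mok_nc[OF assms(2) assms(3) fy[OF y(1,4)]] y by auto
      ultimately show "f y \<in> P \<and> a < f y \<and> f y < b \<and> \<not> lab (f y)" using arc y by auto
    qed
  qed (use assms(1) in auto)
qed

lemma count2:
  assumes "finite P" "mok P lab M" "(a,b) \<in> M" "x < b"
  shows "card {y\<in>P. a < y \<and> y \<le> x \<and> \<not> lab y} \<le> card {y\<in>P. a < y \<and> y \<le> x \<and> lab y}"
proof -
  define f where "f y = (SOME z. (z,y) \<in> M)" for y
  have fy: "(f y, y) \<in> M" if "y \<in> P" "\<not> lab y" for y
    using someI_ex[OF mok_minus[OF assms(2) that]] by (simp add: f_def)
  show ?thesis
  proof (rule card_inj_on_le)
    show "inj_on f {y\<in>P. a < y \<and> y \<le> x \<and> \<not> lab y}"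
    proof (rule inj_onI)
      fix y1 y2 assume "y1 \<in> {y\<in>P. a < y \<and> y \<le> x \<and> \<not> lab y}" "y2 \<in> {y\<in>P. a < y \<and> y \<le> x \<and> \<not> lab y}" "f y1 = f y2"
      then show "y1 = y2" using mok_share[OF assms(2) fy fy, of y1 y2 "f y1"] by auto
    qed
    show "f ` {y\<in>P. a < y \<and> y \<le> x \<and> \<not> lab y} \<subseteq> {y\<in>P. a < y \<and> y \<le> x \<and> lab y}"
    proof clarify
      fix y assume y: "y \<in> P" "a < y" "y \<le> x" "\<not> lab y"
      have arc: "f y \<in> P" "f y < y" "lab (f y)" using mok_arc[OF assms(2) fy[OF y(1,4)]] by auto
      have "f y \<noteq> a"
      proof
        assume "f y = a"
        then have "y = b" using mok_share[OF assms(2) fy[OF y(1,4)] assms(3), of a] by auto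
        then show False using y assms(4) by simp
      qed
      moreover have "\<not> f y < a" using mok_nc[OF assms(2) fy[OF y(1,4)] assms(3)] y assms(4) by auto
      ultimately show "f y \<in> P \<and> a < f y \<and> f y \<le> x \<and> lab (f y)" using arc y by auto
    qed
  qed (use assms(1) in auto)
qed

lemma no_longer:
  assumes "finite P" "mok P lab M" "mok P lab M'" "(a,b) \<in> M" "(a,b') \<in> M'" "b < b'"
  shows False
proof -
  have c1: "card {y\<in>P. a < y \<and> y < b \<and> lab y} \<le> card {y\<in>P. a < y \<and> y < b \<and> \<not> lab y}"
    using count1[OF assms(1,2,4)] .
  have c2: "card {y\<in>P. a < y \<and> y \<le> b \<and> \<not> lab y} \<le> card {y\<in>P. a < y \<and> y \<le> b \<and> lab y}"
    using count2[OF assms(1,3,5,6)] .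
  have b: "b \<in> P" "\<not> lab b" "a < b" using mok_arc[OF assms(2,4)] by auto
  have e1: "{y\<in>P. a < y \<and> y \<le> b \<and> lab y} = {y\<in>P. a < y \<and> y < b \<and> lab y}"
    using b by (auto simp: le_less)
  have e2: "{y\<in>P. a < y \<and> y \<le> b \<and> \<not> lab y} = insert b {y\<in>P. a < y \<and> y < b \<and> \<not> lab y}"
    using b by (auto simp: le_less)
  have "card {y\<in>P. a < y \<and> y \<le> b \<and> \<not> lab y} = Suc (card {y\<in>P. a < y \<and> y < b \<and> \<not> lab y})"
    unfolding e2 using assms(1) by (subst card_insert_disjoint) auto
  then show False using c1 c2 e1 by simp
qed

lemma mok_subset:
  assumes "finite P" "mok P lab M" "mok P lab M'"
  shows "M \<subseteq> M'"
proof clarify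
  fix a b assume ab: "(a,b) \<in> M"
  have a: "a \<in> P" "lab a" using mok_arc[OF assms(2) ab] by auto
  obtain b' where b': "(a,b') \<in> M'" using mok_plus[OF assms(3) a] by blast
  have "\<not> b < b'" using no_longer[OF assms ab b'] by blast
  moreover have "\<not> b' < b" using no_longer[OF assms(1,3,2) b' ab] by blast
  ultimately show "(a,b) \<in> M'" using b' by simp
qed

lemma mok_unique: "finite P \<Longrightarrow> mok P lab M \<Longrightarrow> mok P lab M' \<Longrightarrow> M = M'"
  using mok_subset by blast

lemma mok_card:
  assumes "finite P" "mok P lab M"
  shows "card M = card {p\<in>P. lab p}"
proof -
  have "bij_betw fst M {p\<in>P. lab p}"
  proof (rule bij_betw_imageI)
    show "inj_on fst M"
    proof (rule inj_onI)
      fix x y assume "x \<in> M" "y \<in> M" "fst x = fst y"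
      moreover obtain a1 b1 a2 b2 where "x = (a1,b1)" "y = (a2,b2)" by (cases x, cases y) simp
      ultimately show "x = y" using mok_share[OF assms(2), of a1 b1 a2 b2 a1] by auto
    qed
    show "fst ` M = {p\<in>P. lab p}"
    proof
      show "fst ` M \<subseteq> {p\<in>P. lab p}"
      proof clarify
        fix a b assume "(a,b) \<in> M"
        then show "fst (a,b) \<in> P \<and> lab (fst (a,b))" using mok_arc[OF assms(2)] by simp
      qed
      show "{p\<in>P. lab p} \<subseteq> fst ` M"
      proof clarify
        fix p assume "p \<in> P" "lab p"
        then obtain b where "(p,b) \<in> M" using mok_plus[OF assms(2)] by blast
        then show "p \<in> fst ` M" by (metis fst_conv image_eqI)
      qed
    qed
  qed
  then show ?thesis by (rule bij_betw_same_card)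
qed

definition dyck :: "int set \<Rightarrow> (int \<Rightarrow> bool) \<Rightarrow> bool" where
  "dyck P lab \<longleftrightarrow> card {y\<in>P. lab y} = card {y\<in>P. \<not> lab y} \<and>
     (\<forall>x. card {y\<in>P. y \<le> x \<and> \<not> lab y} \<le> card {y\<in>P. y \<le> x \<and> lab y})"

lemma mok_empty: "mok {} lab {}"
  by (simp add: mok_def)

lemma mok_insert:
  assumes "mok P' lab M'" "P' = P - {a,b}" "a \<in> P" "b \<in> P" "a < b" "lab a" "\<not> lab b"
    "\<And>y. y \<in> P \<Longrightarrow> a < y \<Longrightarrow> y < b \<Longrightarrow> False"
  shows "mok P lab (insert (a,b) M')"
proof -
  have arcs: "\<And>c d. (c,d) \<in> M' \<Longrightarrow> c \<in> P' \<and> d \<in> P' \<and> c < d \<and> lab c \<and> \<not> lab d"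
    using mok_arc[OF assms(1)] by blast
  have A: "\<forall>(c, d)\<in>insert (a,b) M'. c \<in> P \<and> d \<in> P \<and> c < d \<and> lab c \<and> \<not> lab d"
    using arcs assms(2-7) by auto
  have B: "\<forall>p\<in>P. \<exists>!e\<in>insert (a,b) M'. fst e = p \<or> snd e = p"
  proof
    fix p assume p: "p \<in> P"
    show "\<exists>!e\<in>insert (a,b) M'. fst e = p \<or> snd e = p"
    proof (cases "p = a \<or> p = b")
      case True
      show ?thesis
      proof (rule ex1I[of _ "(a,b)"])
        show "(a,b) \<in> insert (a,b) M' \<and> (fst (a,b) = p \<or> snd (a,b) = p)" using True by auto
      next
        fix e assume e: "e \<in> insert (a,b) M' \<and> (fst e = p \<or> snd e = p)"
        obtain c d where cd: "e = (c,d)" by (cases e)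
        show "e = (a,b)"
        proof (rule ccontr)
          assume "e \<noteq> (a,b)"
          then have "(c,d) \<in> M'" using e cd by auto
          then have "c \<in> P'" "d \<in> P'" using arcs by auto
          then show False using e cd True assms(2) by auto
        qed
      qed
    next
      case False
      then have pP: "p \<in> P'" using p assms(2) by auto
      obtain e where e: "e \<in> M'" "fst e = p \<or> snd e = p"
        and eu: "\<And>e'. e' \<in> M' \<Longrightarrow> fst e' = p \<or> snd e' = p \<Longrightarrow> e' = e"
        using mok_ex1[OF assms(1) pP] by metis
      show ?thesis
      proof (rule ex1I[of _ e])
        show "e \<in> insert (a,b) M' \<and> (fst e = p \<or> snd e = p)" using e by auto
      next
        fix e' assume e': "e' \<in> insert (a,b) M' \<and> (fst e' = p \<or> snd e' = p)"
        then have "e' \<in> M'" using False by auto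
        then show "e' = e" using eu e' by blast
      qed
    qed
  qed
  have C: "\<forall>(c, d)\<in>insert (a,b) M'. \<forall>(e, f)\<in>insert (a,b) M'. \<not> (c < e \<and> e < d \<and> d < f)"
  proof (intro ballI, clarify)
    fix c d e f
    assume cd: "(c,d) \<in> insert (a,b) M'" and ef: "(e,f) \<in> insert (a,b) M'"
      and h: "c < e" "e < d" "d < f"
    consider "(c,d) = (a,b)" "(e,f) = (a,b)" | "(c,d) = (a,b)" "(e,f) \<in> M'"
      | "(c,d) \<in> M'" "(e,f) = (a,b)" | "(c,d) \<in> M'" "(e,f) \<in> M'" using cd ef by auto
    then show False
    proof cases
      case 1 then show False using h by auto
    next
      case 2
      then have "e \<in> P" "e \<noteq> a" "e \<noteq> b" using arcs assms(2) by auto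
      then show False using assms(8) h 2 by auto
    next
      case 3
      then have "d \<in> P" "d \<noteq> a" "d \<noteq> b" using arcs assms(2) by auto
      then show False using assms(8) h 3 by auto
    next
      case 4 then show False using mok_nc[OF assms(1)] h by blast
    qed
  qed
  show ?thesis unfolding mok_def using A B C by blast
qed

lemma exists_mok: "finite P \<Longrightarrow> dyck P lab \<Longrightarrow> \<exists>M. mok P lab M"
proof (induction "card P" arbitrary: P rule: less_induct)
  case less
  show ?case
  proof (cases "P = {}")
    case True then show ?thesis using mok_empty by blast
  next
    case False
    define Mi where "Mi = {y\<in>P. \<not> lab y}"
    have fin: "finite Mi" using less.prems(1) by (simp add: Mi_def)
    have "Mi \<noteq> {}"
    proof
      assume "Mi = {}"
      then have "card Mi = 0" by simp
      then have "card {y\<in>P. lab y} = 0" using less.prems(2) unfolding dyck_def Mi_def by linarith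
      then have "{y\<in>P. lab y} = {}" using less.prems(1) by simp
      then show False using \<open>Mi = {}\<close> False by (auto simp: Mi_def)
    qed
    define b where "b = Min Mi"
    have b: "b \<in> P" "\<not> lab b" using Min_in[OF fin \<open>Mi \<noteq> {}\<close>] by (auto simp: b_def Mi_def)
    have bmin: "\<And>y. y \<in> P \<Longrightarrow> \<not> lab y \<Longrightarrow> b \<le> y" using Min_le[OF fin] by (auto simp: b_def Mi_def)
    define Pl where "Pl = {y\<in>P. y \<le> b \<and> lab y}"
    have finPl: "finite Pl" using less.prems(1) by (simp add: Pl_def)
    have "card {y\<in>P. y \<le> b \<and> \<not> lab y} \<ge> 1"
    proof -
      have "b \<in> {y\<in>P. y \<le> b \<and> \<not> lab y}" using b by simp
      then show ?thesis using less.prems(1) by (metis (no_types, lifting) One_nat_def Suc_leI card_gt_0_iff empty_iff finite_subset mem_Collect_eq subsetI)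
    qed
    then have "card Pl \<ge> 1" using less.prems(2) unfolding dyck_def Pl_def by (meson order_trans)
    then have "Pl \<noteq> {}" by auto
    define a where "a = Max Pl"
    have a: "a \<in> P" "a \<le> b" "lab a" using Max_in[OF finPl \<open>Pl \<noteq> {}\<close>] by (auto simp: a_def Pl_def)
    have amax: "\<And>y. y \<in> P \<Longrightarrow> y \<le> b \<Longrightarrow> lab y \<Longrightarrow> y \<le> a" using Max_ge[OF finPl] by (auto simp: a_def Pl_def)
    have ab: "a < b" using a b by (metis order_le_less)
    have gap: "\<And>y. y \<in> P \<Longrightarrow> a < y \<Longrightarrow> y < b \<Longrightarrow> False"
    proof -
      fix y assume y: "y \<in> P" "a < y" "y < b"
      then have "lab y" using bmin by force
      then show False using amax y by force
    qed
    define P' where "P' = P - {a,b}"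
    have fP': "finite P'" using less.prems(1) by (simp add: P'_def)
    have cP': "card P' < card P"
      unfolding P'_def using less.prems(1) a(1) by (intro psubset_card_mono) auto
    have e1: "{y\<in>P'. lab y} = {y\<in>P. lab y} - {a}" using b a by (auto simp: P'_def)
    have e2: "{y\<in>P'. \<not> lab y} = {y\<in>P. \<not> lab y} - {b}" using b a by (auto simp: P'_def)
    have d1: "card {y\<in>P'. lab y} = card {y\<in>P'. \<not> lab y}"
      unfolding e1 e2 using less.prems a b by (simp add: dyck_def)
    have d2: "card {y\<in>P'. y \<le> x \<and> \<not> lab y} \<le> card {y\<in>P'. y \<le> x \<and> lab y}" for x
    proof (cases "x < b")
      case True
      have "{y\<in>P'. y \<le> x \<and> \<not> lab y} = {}" using bmin True by (force simp: P'_def)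
      then have "card {y\<in>P'. y \<le> x \<and> \<not> lab y} = 0" by (metis card.empty)
      then show ?thesis by linarith
    next
      case False
      have f1: "{y\<in>P'. y \<le> x \<and> \<not> lab y} = {y\<in>P. y \<le> x \<and> \<not> lab y} - {b}" using a b by (auto simp: P'_def)
      have f2: "{y\<in>P'. y \<le> x \<and> lab y} = {y\<in>P. y \<le> x \<and> lab y} - {a}" using a b by (auto simp: P'_def)
      have "card {y\<in>P. y \<le> x \<and> \<not> lab y} \<le> card {y\<in>P. y \<le> x \<and> lab y}"
        using less.prems(2) by (simp add: dyck_def)
      then show ?thesis unfolding f1 f2 using less.prems(1) a b False by simp
    qed
    have "dyck P' lab" using d1 d2 by (simp add: dyck_def)
    then obtain M' where M': "mok P' lab M'" using less.hyps[OF cP'] fP' by blast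
    have "mok P lab (insert (a,b) M')"
      by (rule mok_insert[OF M' P'_def a(1) b(1) ab a(3) b(2) gap])
    then show ?thesis by blast
  qed
qed

lemma mok_card_fst:
  assumes "mok P lab M"
  shows "card {e\<in>M. Q (fst e)} = card {p\<in>P. Q p \<and> lab p}"
proof -
  have "bij_betw fst {e\<in>M. Q (fst e)} {p\<in>P. Q p \<and> lab p}"
  proof (rule bij_betw_imageI)
    show "inj_on fst {e\<in>M. Q (fst e)}"
    proof (rule inj_onI)
      fix x y assume "x \<in> {e\<in>M. Q (fst e)}" "y \<in> {e\<in>M. Q (fst e)}" "fst x = fst y"
      moreover obtain a1 b1 a2 b2 where "x = (a1,b1)" "y = (a2,b2)" by (cases x, cases y) simp
      ultimately show "x = y" using mok_share[OF assms, of a1 b1 a2 b2 a1] by auto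
    qed
    show "fst ` {e\<in>M. Q (fst e)} = {p\<in>P. Q p \<and> lab p}"
    proof
      show "fst ` {e\<in>M. Q (fst e)} \<subseteq> {p\<in>P. Q p \<and> lab p}"
      proof clarify
        fix a b assume "(a,b) \<in> M" "Q (fst (a,b))"
        then show "fst (a,b) \<in> P \<and> Q (fst (a,b)) \<and> lab (fst (a,b))" using mok_arc[OF assms] by simp
      qed
      show "{p\<in>P. Q p \<and> lab p} \<subseteq> fst ` {e\<in>M. Q (fst e)}"
      proof clarify
        fix p assume "p \<in> P" "Q p" "lab p"
        then obtain b where "(p,b) \<in> M" using mok_plus[OF assms] by blast
        then show "p \<in> fst ` {e\<in>M. Q (fst e)}" using \<open>Q p\<close> by (metis (mono_tags, lifting) fst_conv image_eqI mem_Collect_eq)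
      qed
    qed
  qed
  then show ?thesis by (rule bij_betw_same_card)
qed

lemma mok_card_snd:
  assumes "mok P lab M"
  shows "card {e\<in>M. Q (snd e)} = card {p\<in>P. Q p \<and> \<not> lab p}"
proof -
  have "bij_betw snd {e\<in>M. Q (snd e)} {p\<in>P. Q p \<and> \<not> lab p}"
  proof (rule bij_betw_imageI)
    show "inj_on snd {e\<in>M. Q (snd e)}"
    proof (rule inj_onI)
      fix x y assume "x \<in> {e\<in>M. Q (snd e)}" "y \<in> {e\<in>M. Q (snd e)}" "snd x = snd y"
      moreover obtain a1 b1 a2 b2 where "x = (a1,b1)" "y = (a2,b2)" by (cases x, cases y) simp
      ultimately show "x = y" using mok_share[OF assms, of a1 b1 a2 b2 b1] by auto
    qed
    show "snd ` {e\<in>M. Q (snd e)} = {p\<in>P. Q p \<and> \<not> lab p}"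
    proof
      show "snd ` {e\<in>M. Q (snd e)} \<subseteq> {p\<in>P. Q p \<and> \<not> lab p}"
      proof clarify
        fix a b assume "(a,b) \<in> M" "Q (snd (a,b))"
        then show "snd (a,b) \<in> P \<and> Q (snd (a,b)) \<and> \<not> lab (snd (a,b))" using mok_arc[OF assms] by simp
      qed
      show "{p\<in>P. Q p \<and> \<not> lab p} \<subseteq> snd ` {e\<in>M. Q (snd e)}"
      proof clarify
        fix p assume "p \<in> P" "Q p" "\<not> lab p"
        then obtain a where "(a,p) \<in> M" using mok_minus[OF assms] by blast
        then show "p \<in> snd ` {e\<in>M. Q (snd e)}" using \<open>Q p\<close> by (metis (mono_tags, lifting) snd_conv image_eqI mem_Collect_eq)
      qed
    qed
  qed
  then show ?thesis by (rule bij_betw_same_card)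
qed

section \<open>The specific labeling\<close>

lemma finite_Pts: "finite (Pts n)"
  by (simp add: Pts_def)

locale lab_setup =
  fixes n :: nat and u :: "nat list"
begin

definition A where "A = {j\<in>{1..n}. alpha u j}"
definition B where "B = {j\<in>{1..n}. \<not> alpha u j}"
definition Lft :: "int set" where "Lft = {-2 * int n..< - int n}"
definition Rgt :: "int set" where "Rgt = {int n + 1..2 * int n}"

lemma cardAB: "card A + card B = n"
proof -
  have "A \<union> B = {1..n}" "A \<inter> B = {}" by (auto simp: A_def B_def)
  then show ?thesis using card_Un_disjoint[of A B] by (metis card_atLeastAtMost diff_Suc_1 finite_Un finite_atLeastAtMost)
qed

lemma card_Lft: "card Lft = n" by (simp add: Lft_def)
lemma card_Rgt: "card Rgt = n" by (simp add: Rgt_def)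

lemma card_neg: "card ((\<lambda>j. - int j) ` X) = card X"
  by (rule card_image) (auto simp: inj_on_def)

lemma card_pos: "card (int ` X) = card X"
  by (rule card_image) (auto simp: inj_on_def)

lemma lab_lt0: "p \<in> Pts n \<Longrightarrow> p < 0 \<Longrightarrow> ext_label n u p \<longleftrightarrow> (p < - int n \<or> (\<not> alpha u (nat (-p))))"
  by (auto simp: ext_label_def Pts_def)

lemma plus_neg: "{p\<in>Pts n. p < 0 \<and> ext_label n u p} = Lft \<union> (\<lambda>j. - int j) ` B"
proof
  show "{p\<in>Pts n. p < 0 \<and> ext_label n u p} \<subseteq> Lft \<union> (\<lambda>j. - int j) ` B"
  proof clarify
    fix p assume p: "p \<in> Pts n" "p < 0" "ext_label n u p" "p \<notin> (\<lambda>j. - int j) ` B"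
    show "p \<in> Lft"
    proof (rule ccontr)
      assume "p \<notin> Lft"
      then have "- int n \<le> p" using p(1) by (auto simp: Lft_def Pts_def)
      then have "nat (-p) \<in> B" using p by (auto simp: B_def ext_label_def)
      moreover have "p = - int (nat (-p))" using p(2) by simp
      ultimately show False using p(4) by blast
    qed
  qed
  show "Lft \<union> (\<lambda>j. - int j) ` B \<subseteq> {p\<in>Pts n. p < 0 \<and> ext_label n u p}"
    by (auto simp: Lft_def B_def Pts_def ext_label_def)
qed

lemma minus_neg: "{p\<in>Pts n. p < 0 \<and> \<not> ext_label n u p} = (\<lambda>j. - int j) ` A"
proof
  show "{p\<in>Pts n. p < 0 \<and> \<not> ext_label n u p} \<subseteq> (\<lambda>j. - int j) ` A"
  proof clarify
    fix p assume p: "p \<in> Pts n" "p < 0" "\<not> ext_label n u p"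
    then have "- int n \<le> p" by (cases "p < - int n") (auto simp: ext_label_def)
    then have "nat (-p) \<in> A" using p by (auto simp: A_def ext_label_def Pts_def)
    moreover have "p = - int (nat (-p))" using p(2) by simp
    ultimately show "p \<in> (\<lambda>j. - int j) ` A" by blast
  qed
  show "(\<lambda>j. - int j) ` A \<subseteq> {p\<in>Pts n. p < 0 \<and> \<not> ext_label n u p}"
    by (auto simp: A_def Pts_def ext_label_def)
qed

lemma plus_pos: "{p\<in>Pts n. 0 < p \<and> ext_label n u p} = int ` A"
proof
  show "{p\<in>Pts n. 0 < p \<and> ext_label n u p} \<subseteq> int ` A"
  proof clarify
    fix p assume p: "p \<in> Pts n" "0 < p" "ext_label n u p"
    then have "p \<le> int n" by (cases "int n < p") (auto simp: ext_label_def)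
    then have "nat p \<in> A" using p by (auto simp: A_def ext_label_def Pts_def)
    moreover have "p = int (nat p)" using p(2) by simp
    ultimately show "p \<in> int ` A" by blast
  qed
  show "int ` A \<subseteq> {p\<in>Pts n. 0 < p \<and> ext_label n u p}"
    by (auto simp: A_def Pts_def ext_label_def)
qed

lemma minus_pos: "{p\<in>Pts n. 0 < p \<and> \<not> ext_label n u p} = Rgt \<union> int ` B"
proof
  show "{p\<in>Pts n. 0 < p \<and> \<not> ext_label n u p} \<subseteq> Rgt \<union> int ` B"
  proof clarify
    fix p assume p: "p \<in> Pts n" "0 < p" "\<not> ext_label n u p" "p \<notin> int ` B"
    show "p \<in> Rgt"
    proof (rule ccontr)
      assume "p \<notin> Rgt"
      then have "p \<le> int n" using p(1) by (auto simp: Rgt_def Pts_def)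
      then have "nat p \<in> B" using p by (auto simp: B_def ext_label_def)
      moreover have "p = int (nat p)" using p(2) by simp
      ultimately show False using p(4) by blast
    qed
  qed
  show "Rgt \<union> int ` B \<subseteq> {p\<in>Pts n. 0 < p \<and> \<not> ext_label n u p}"
    by (auto simp: Rgt_def B_def Pts_def ext_label_def)
qed

lemma split_sign: "{p\<in>Pts n. Q p} = {p\<in>Pts n. p < 0 \<and> Q p} \<union> {p\<in>Pts n. 0 < p \<and> Q p}"
  by (auto simp: Pts_def)

lemma card_split: "card {p\<in>Pts n. Q p} = card {p\<in>Pts n. p < 0 \<and> Q p} + card {p\<in>Pts n. 0 < p \<and> Q p}"
proof -
  have f1: "finite {p\<in>Pts n. p < 0 \<and> Q p}" "finite {p\<in>Pts n. 0 < p \<and> Q p}" using finite_Pts by simp_all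
  have d: "{p\<in>Pts n. p < 0 \<and> Q p} \<inter> {p\<in>Pts n. 0 < p \<and> Q p} = {}" by auto
  show ?thesis by (subst split_sign, rule card_Un_disjoint[OF f1 d])
qed

lemma finA: "finite A" by (simp add: A_def)
lemma finB: "finite B" by (simp add: B_def)

lemma disj1: "Lft \<inter> (\<lambda>j. - int j) ` B = {}" by (auto simp: Lft_def B_def)
lemma disj2: "Rgt \<inter> int ` B = {}" by (auto simp: Rgt_def B_def)

lemma card_plus_neg: "card {p\<in>Pts n. p < 0 \<and> ext_label n u p} = n + card B"
  unfolding plus_neg by (subst card_Un_disjoint) (auto simp: disj1 card_Lft card_neg Lft_def B_def)

lemma card_minus_pos: "card {p\<in>Pts n. 0 < p \<and> \<not> ext_label n u p} = n + card B"
  unfolding minus_pos by (subst card_Un_disjoint) (auto simp: disj2 card_Rgt card_pos Rgt_def B_def)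

lemma card_plus: "card {p\<in>Pts n. ext_label n u p} = 2 * n"
  using card_split[of "ext_label n u"] card_plus_neg plus_pos card_pos[of A] cardAB by simp

lemma card_minus: "card {p\<in>Pts n. \<not> ext_label n u p} = 2 * n"
  using card_split[of "\<lambda>p. \<not> ext_label n u p"] card_minus_pos minus_neg card_neg[of A] cardAB by simp

lemma dyck_lab: "dyck (Pts n) (ext_label n u)"
  unfolding dyck_def
proof (intro conjI allI)
  show "card {y \<in> Pts n. ext_label n u y} = card {y \<in> Pts n. \<not> ext_label n u y}"
    using card_plus card_minus by simp
next
  fix x
  show "card {y \<in> Pts n. y \<le> x \<and> \<not> ext_label n u y} \<le> card {y \<in> Pts n. y \<le> x \<and> ext_label n u y}"
  proof (cases "x < - int n")
    case True
    have "{y \<in> Pts n. y \<le> x \<and> \<not> ext_label n u y} = {}" using True by (auto simp: ext_label_def)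
    then show ?thesis by (metis card.empty le0)
  next
    case False
    note F = False
    show ?thesis
    proof (cases "x \<le> int n")
      case True
      have s1: "{y \<in> Pts n. y \<le> x \<and> \<not> ext_label n u y} \<subseteq> (\<lambda>j. - int j) ` A \<union> int ` B"
      proof
        fix y assume y: "y \<in> {y \<in> Pts n. y \<le> x \<and> \<not> ext_label n u y}"
        have "y \<noteq> 0" using y by (auto simp: Pts_def)
        then have "y < 0 \<or> 0 < y" by auto
        then show "y \<in> (\<lambda>j. - int j) ` A \<union> int ` B"
        proof
          assume "y < 0" then show ?thesis using y minus_neg by blast
        next
          assume "0 < y"
          then have "y \<in> Rgt \<union> int ` B" using y minus_pos by blast
          moreover have "y \<notin> Rgt" using y True by (auto simp: Rgt_def)
          ultimately show ?thesis by blast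
        qed
      qed
      have "card {y \<in> Pts n. y \<le> x \<and> \<not> ext_label n u y} \<le> card ((\<lambda>j. - int j) ` A \<union> int ` B)"
        by (rule card_mono[OF _ s1]) (simp add: finA finB)
      also have "\<dots> \<le> card ((\<lambda>j. - int j) ` A) + card (int ` B)" by (rule card_Un_le)
      also have "\<dots> = n" using card_neg card_pos cardAB by simp
      also have "\<dots> = card Lft" by (simp add: card_Lft)
      also have "\<dots> \<le> card {y \<in> Pts n. y \<le> x \<and> ext_label n u y}"
        by (rule card_mono[OF finite_subset[OF _ finite_Pts]]) (use F in \<open>auto simp: Lft_def Pts_def ext_label_def\<close>)
      finally show ?thesis .
    next
      case False
      have "{y \<in> Pts n. y \<le> x \<and> ext_label n u y} = {y \<in> Pts n. ext_label n u y}"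
        using False by (auto simp: ext_label_def)
      then have "card {y \<in> Pts n. y \<le> x \<and> ext_label n u y} = 2 * n" using card_plus by simp
      moreover have "card {y \<in> Pts n. y \<le> x \<and> \<not> ext_label n u y} \<le> card {y \<in> Pts n. \<not> ext_label n u y}"
        by (rule card_mono) (use finite_Pts in auto)
      ultimately show ?thesis using card_minus by simp
    qed
  qed
qed

end


lemma is_matching_iff: "is_matching n lab M \<longleftrightarrow> card M = 2 * n \<and> mok (Pts n) lab M"
  by (simp add: is_matching_def mok_def)

lemma matching_mok: "mok (Pts n) (ext_label n u) (matching n u)"
proof -
  obtain M where M: "mok (Pts n) (ext_label n u) M"
    using exists_mok[OF finite_Pts lab_setup.dyck_lab] by blast
  have isM: "is_matching n (ext_label n u) M"
    unfolding is_matching_iff using M mok_card[OF finite_Pts M] lab_setup.card_plus by simp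
  have "matching n u = M"
    unfolding matching_def
  proof (rule the_equality)
    show "is_matching n (ext_label n u) M" by (rule isM)
    fix M' assume "is_matching n (ext_label n u) M'"
    then have "mok (Pts n) (ext_label n u) M'" by (simp add: is_matching_iff)
    then show "M' = M" using mok_unique[OF finite_Pts _ M] by blast
  qed
  then show ?thesis using M by simp
qed

lemma even_np: "even (card (neg_pos_arcs n u))"
proof -
  define M where "M = matching n u"
  define lab where "lab = ext_label n u"
  have mk: "mok (Pts n) lab M" using matching_mok by (simp add: M_def lab_def)
  have finM: "finite M"
  proof (rule finite_subset)
    show "M \<subseteq> Pts n \<times> Pts n" using mok_arc[OF mk] by auto
    show "finite (Pts n \<times> Pts n)" using finite_Pts by simp
  qed
  define NEG where "NEG = {e\<in>M. fst e < 0}"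
  define NN where "NN = {e\<in>M. snd e < 0}"
  have np: "neg_pos_arcs n u = NEG - NN"
  proof
    show "neg_pos_arcs n u \<subseteq> NEG - NN"
      by (auto simp: neg_pos_arcs_def NEG_def NN_def M_def)
    show "NEG - NN \<subseteq> neg_pos_arcs n u"
    proof clarify
      fix a b assume h: "(a,b) \<in> NEG" "(a,b) \<notin> NN"
      then have ab: "(a,b) \<in> M" "a < 0" "\<not> b < 0" by (auto simp: NEG_def NN_def)
      have "b \<in> Pts n" using mok_arc[OF mk ab(1)] by simp
      then have "b \<noteq> 0" by (simp add: Pts_def)
      then show "(a,b) \<in> neg_pos_arcs n u" using ab by (auto simp: neg_pos_arcs_def M_def)
    qed
  qed
  have sub: "NN \<subseteq> NEG"
  proof clarify
    fix a b assume "(a,b) \<in> NN"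
    then have "(a,b) \<in> M" "b < 0" by (auto simp: NN_def)
    moreover then have "a < b" using mok_arc[OF mk] by blast
    ultimately show "(a,b) \<in> NEG" by (simp add: NEG_def)
  qed
  have c1: "card NEG = n + card (lab_setup.B n u)"
    unfolding NEG_def using mok_card_fst[OF mk, of "\<lambda>p. p < 0"] lab_setup.card_plus_neg
    by (simp add: lab_def)
  have c2: "card NN = card (lab_setup.A n u)"
    unfolding NN_def using mok_card_snd[OF mk, of "\<lambda>p. p < 0"] lab_setup.minus_neg lab_setup.card_neg
    by (simp add: lab_def)
  have "card (neg_pos_arcs n u) = card NEG - card NN"
    unfolding np using finM sub by (simp add: card_Diff_subset NN_def finite_subset)
  also have "\<dots> = 2 * card (lab_setup.B n u)" using c1 c2 lab_setup.cardAB[of n u] by simp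
  finally show ?thesis by simp
qed

lemma set_sorted_sub: "x \<in> set (sorted_list_of_set S) \<Longrightarrow> x \<in> S"
  by (cases "finite S") auto

lemma cup_pos:
  assumes "0 < p"
  shows "(\<exists>b. (p,b) \<in> cup_diagram n u) \<longleftrightarrow> (\<exists>b. (p,b) \<in> matching n u)"
proof -
  define S where "S = {y. y > 0 \<and> (- y, y) \<in> neg_pos_arcs n u}"
  define ys where "ys = sorted_list_of_set S"
  define k where "k = length ys div 2"
  define N where "N = (\<Union>i<k. {(- (ys ! (2 * i + 1)), ys ! (2 * i)), (- (ys ! (2 * i)), ys ! (2 * i + 1))})"
  have cup: "cup_diagram n u = (matching n u - neg_pos_arcs n u) \<union> N"
    unfolding cup_diagram_def Let_def by (simp add: S_def ys_def k_def N_def)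
  have Nneg: "fst e < 0" if eN: "e \<in> N" for e
  proof -
    obtain i where i: "i < k" "e \<in> {(- (ys ! (2 * i + 1)), ys ! (2 * i)), (- (ys ! (2 * i)), ys ! (2 * i + 1))}"
      using eN unfolding N_def by blast
    have "2 * i + 1 < length ys" using i(1) by (simp add: k_def)
    then have "ys ! (2*i) \<in> S" "ys ! (2*i+1) \<in> S"
      using set_sorted_sub[of _ S] nth_mem by (auto simp: ys_def)
    then show ?thesis using i(2) by (auto simp: S_def)
  qed
  show ?thesis
  proof
    assume "\<exists>b. (p,b) \<in> cup_diagram n u"
    then obtain b where b: "(p,b) \<in> cup_diagram n u" by blast
    have "(p,b) \<notin> N" using Nneg[of "(p,b)"] assms by auto
    then show "\<exists>b. (p,b) \<in> matching n u" using b cup by auto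
  next
    assume "\<exists>b. (p,b) \<in> matching n u"
    then obtain b where b: "(p,b) \<in> matching n u" by blast
    have "(p,b) \<notin> neg_pos_arcs n u" using assms by (auto simp: neg_pos_arcs_def)
    then show "\<exists>b. (p,b) \<in> cup_diagram n u" using b cup by auto
  qed
qed

lemma alpha_from_cup:
  assumes "1 \<le> j" "j \<le> n"
  shows "alpha u j \<longleftrightarrow> (\<exists>b. (int j, b) \<in> cup_diagram n u)"
proof -
  have pj: "int j \<in> Pts n" using assms by (simp add: Pts_def)
  have l: "ext_label n u (int j) = alpha u j" using assms by (simp add: ext_label_def)
  have "ext_label n u (int j) \<longleftrightarrow> (\<exists>b. (int j, b) \<in> matching n u)"
    using mok_plus[OF matching_mok pj] mok_arc[OF matching_mok] by blast
  then show ?thesis using l cup_pos[of "int j" n u] assms by simp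
qed

theorem lemma2p7:
  fixes n :: nat
  assumes "n \<ge> 4"
  shows "(\<forall>u. in_Wp n u \<longrightarrow> even (card (neg_pos_arcs n u))) \<and>
         (\<forall>u v. in_Wp n u \<longrightarrow> in_Wp n v \<longrightarrow> cup_diagram n u = cup_diagram n v \<longrightarrow> cox_eq n u v)"
proof (intro conjI allI impI)
  fix u show "even (card (neg_pos_arcs n u))" by (rule even_np)
next
  fix u v
  assume u: "in_Wp n u" and v: "in_Wp n v" and c: "cup_diagram n u = cup_diagram n v"
  have n2: "2 \<le> n" using assms by simp
  have vu: "valid n (alpha u)" using valid_alpha[OF n2] u by (simp add: in_Wp_def)
  have vv: "valid n (alpha v)" using valid_alpha[OF n2] v by (simp add: in_Wp_def)
  have eq: "alpha u = alpha v"
  proof (rule ext)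
    fix m
    show "alpha u m = alpha v m"
    proof (cases "m = 0 \<or> n < m")
      case True then show ?thesis using vu vv by (auto simp: valid_def)
    next
      case False
      then have "1 \<le> m" "m \<le> n" by auto
      then show ?thesis using alpha_from_cup[of m n u] alpha_from_cup[of m n v] c by simp
    qed
  qed
  have cu: "cox_eq n u (cw n (alpha u))" using inWp_canon[OF n2 u] .
  have cv: "cox_eq n v (cw n (alpha v))" using inWp_canon[OF n2 v] .
  show "cox_eq n u v" using cu cox_eq.cox_sym[OF cv] eq by (auto intro: cox_eq.cox_trans)
qed

end
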